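(* Let $\mathscr{T}$ be an accessible subalgebra of $\mathfrak{gl}(d,\mathbb{R})$. There exists $K>0$ such that for all $u,v\in\mathbb{R}P^{d-1}$ there is a family $\{\mathfrak{R}_{u,v}(t)\}_{t\in[0,1]}\subset\mathscr{T}$ with $\|\mathfrak{R}_{u,v}(t)\|\le K$ for all $t$ such that $\Phi^1_{\mathfrak{R}_{u,v}}u=v$, where $\Phi^t_{\mathfrak{R}_{u,v}}$ is the solution (with $\Phi^0=\mathrm{Id}$) of the linear equation $\dot{u}(t)=\mathfrak{R}_{u,v}(t)u(t)$.
   Context: A non-empty closed subalgebra $\mathscr{T}\subseteq\mathfrak{gl}(d,\mathbb{R})$ is accessible if its associated Lie subgroup acts transitively on $\mathbb{R}P^{d-1}$. *)

theory Defs
  imports "HOL-Analysis.Analysis"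
begin

text \<open>Matrices in gl(d,R) are represented as real^'n^'n with d = CARD('n).
  Matrix product is **, identity is mat 1.\<close>

fun matpow :: "real^'n^'n \<Rightarrow> nat \<Rightarrow> real^'n^'n" where
  "matpow A 0 = mat 1"
| "matpow A (Suc k) = A ** matpow A k"

definition mexp :: "real^'n^'n \<Rightarrow> real^'n^'n" where
  "mexp A = (\<Sum>k. (1 / fact k) *\<^sub>R matpow A k)"

definition lie_subalgebra :: "(real^'n^'n) set \<Rightarrow> bool" where
  "lie_subalgebra T \<longleftrightarrow> T \<noteq> {} \<and> subspace T \<and>
     (\<forall>A\<in>T. \<forall>B\<in>T. A ** B - B ** A \<in> T)"

text \<open>The connected Lie subgroup associated with T: the group generated by exp(T).
  (Since exp(-A) = exp(A)^{-1} and T is a subspace, the monoid generated is a group.)\<close>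
inductive_set lie_group_of :: "(real^'n^'n) set \<Rightarrow> (real^'n^'n) set"
  for T :: "(real^'n^'n) set" where
  id: "mat 1 \<in> lie_group_of T"
| step: "A \<in> T \<Longrightarrow> g \<in> lie_group_of T \<Longrightarrow> mexp A ** g \<in> lie_group_of T"

text \<open>Points of RP^{d-1} are represented by non-zero vectors; two vectors represent the
  same point iff they are non-zero multiples of each other.\<close>
definition proj_eq :: "real^'n \<Rightarrow> real^'n \<Rightarrow> bool" where
  "proj_eq u v \<longleftrightarrow> u \<noteq> 0 \<and> v \<noteq> 0 \<and> (\<exists>c. c \<noteq> 0 \<and> u = c *\<^sub>R v)"

definition accessible :: "(real^'n^'n) set \<Rightarrow> bool" where
  "accessible T \<longleftrightarrow> lie_subalgebra T \<and>
     (\<forall>u v. u \<noteq> 0 \<longrightarrow> v \<noteq> 0 \<longrightarrow> (\<exists>g\<in>lie_group_of T. proj_eq (g *v u) v))"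

text \<open>Phi is the (Caratheodory) fundamental solution on [0,1] of Phi' = R(t) Phi, Phi(0) = Id.\<close>
definition fundamental_solution :: "(real \<Rightarrow> real^'n^'n) \<Rightarrow> (real \<Rightarrow> real^'n^'n) \<Rightarrow> bool" where
  "fundamental_solution R \<Phi> \<longleftrightarrow>
     (\<forall>t\<in>{0..1}. ((\<lambda>s. R s ** \<Phi> s) has_integral (\<Phi> t - mat 1)) {0..t})"

end

theory Submission
  imports Defs
begin


lemma matrix_add_rdistrib': "((B + C) ** A) = (B ** A) + (C ** A)"
  by (vector matrix_matrix_mult_def sum.distrib[symmetric] field_simps)

lemma bilinear_mm: "bilinear ((**) :: real^'n^'n \<Rightarrow> real^'n^'n \<Rightarrow> real^'n^'n)"
  unfolding bilinear_def
  by (auto intro!: linearI simp: matrix_add_ldistrib matrix_add_rdistrib' matrix_scalar_ac scalar_matrix_assoc)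

lemma bb_mm: "bounded_bilinear ((**) :: real^'n^'n \<Rightarrow> real^'n^'n \<Rightarrow> real^'n^'n)"
  using bilinear_mm bilinear_conv_bounded_bilinear by blast

lemma matpow_comm: "matpow A k ** A = A ** matpow A k"
  by (induction k) (auto simp: matrix_mul_assoc[symmetric])

lemma matpow_scaleR: "matpow (c *\<^sub>R A) k = (c ^ k) *\<^sub>R matpow A k"
  by (induction k) (auto simp: matrix_scalar_ac scalar_matrix_assoc mult.commute)

lemma matpow_cont: "continuous_on S (\<lambda>A::real^'n^'n. matpow A k)"
  by (induction k) (auto intro!: bounded_bilinear.continuous_on[OF bb_mm] continuous_on_id)

lemma mbound_ex: "\<exists>K. 0 < K \<and> (\<forall>(a::real^'n^'n) (b::real^'n^'n). norm (a ** b) \<le> norm a * norm b * K)"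
  using bounded_bilinear.pos_bounded[OF bb_mm] by blast

lemma matpow_norm: assumes K0: "0 < K" and KM: "\<And>(a::real^'n^'n) (b::real^'n^'n). norm (a ** b) \<le> norm a * norm b * K" shows "norm (matpow (A::real^'n^'n) k) \<le> norm (mat 1 :: real^'n^'n) * (K * norm A) ^ k"
proof (induction k)
  case 0 then show ?case by simp
next
  case (Suc k)
  have "norm (A ** matpow A k) \<le> norm A * norm (matpow A k) * K"
    by (rule KM)
  then have "norm (matpow A (Suc k)) \<le> norm A * norm (matpow A k) * K"
    by simp
  also have "\<dots> \<le> norm A * (norm (mat 1 :: real^'n^'n) * (K * norm A) ^ k) * K"
    using Suc.IH K0 by (intro mult_right_mono mult_left_mono) auto
  also have "\<dots> = norm (mat 1 :: real^'n^'n) * (K * norm A) ^ Suc k"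
    by (simp add: algebra_simps)
  finally show ?case .
qed

lemma mexp_term_bound:
  assumes K0: "0 < K" and KM: "\<And>(a::real^'n^'n) (b::real^'n^'n). norm (a ** b) \<le> norm a * norm b * K" and "norm (A::real^'n^'n) \<le> r"
  shows "norm ((1 / fact k) *\<^sub>R matpow A k) \<le> norm (mat 1 :: real^'n^'n) * (K * r) ^ k / fact k"
proof -
  have "norm ((1 / fact k) *\<^sub>R matpow A k) = norm (matpow A k) / fact k" by simp
  also have "\<dots> \<le> norm (mat 1 :: real^'n^'n) * (K * norm A) ^ k / fact k"
    by (intro divide_right_mono matpow_norm[OF K0 KM]) auto
  also have "\<dots> \<le> norm (mat 1 :: real^'n^'n) * (K * r) ^ k / fact k"
    using assms K0 by (intro divide_right_mono mult_left_mono power_mono mult_left_mono) auto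
  finally show ?thesis .
qed

lemma summable_bound: "summable (\<lambda>k. c * x ^ k / fact k :: real)"
proof -
  have "summable (\<lambda>k. c * (x ^ k /\<^sub>R fact k))"
    by (intro summable_mult summable_exp_generic)
  then show ?thesis by (simp add: divide_inverse ac_simps)
qed

lemma mexp_summable: "summable (\<lambda>k. (1 / fact k) *\<^sub>R matpow (A::real^'n^'n) k)"
proof -
  obtain K where K: "0 < K \<and> (\<forall>(a::real^'n^'n) (b::real^'n^'n). norm (a ** b) \<le> norm a * norm b * K)" using mbound_ex by blast
  show ?thesis
    by (rule summable_comparison_test[OF _ summable_bound[of "norm (mat 1 :: real^'n^'n)" "K * norm A"]])
       (rule exI[of _ 0], intro allI impI mexp_term_bound[of K A "norm A"], use K in auto)
qed

lemma mexp_sums: "(\<lambda>k. (1 / fact k) *\<^sub>R matpow (A::real^'n^'n) k) sums mexp A"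
  unfolding mexp_def using mexp_summable summable_sums by blast

lemma mexp_zero: "mexp (0::real^'n^'n) = mat 1"
proof -
  have "(\<lambda>k. (1 / fact k) *\<^sub>R matpow (0::real^'n^'n) k) = (\<lambda>k. if k = 0 then mat 1 else 0)"
  proof
    fix k show "(1 / fact k) *\<^sub>R matpow (0::real^'n^'n) k = (if k = 0 then mat 1 else 0)"
      by (cases k) simp_all
  qed
  then show ?thesis unfolding mexp_def using sums_single[of 0 "\<lambda>_. mat 1 :: real^'n^'n"]
    by (simp add: sums_iff)
qed

lemma mexp_comm: "A ** mexp (c *\<^sub>R A) = mexp (c *\<^sub>R A) ** (A::real^'n^'n)"
proof -
  have s1: "(\<lambda>k. A ** ((1 / fact k) *\<^sub>R matpow (c *\<^sub>R A) k)) sums (A ** mexp (c *\<^sub>R A))"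
    by (rule bounded_linear.sums[OF bounded_bilinear.bounded_linear_right[OF bb_mm] mexp_sums])
  have s2: "(\<lambda>k. ((1 / fact k) *\<^sub>R matpow (c *\<^sub>R A) k) ** A) sums (mexp (c *\<^sub>R A) ** A)"
    by (rule bounded_linear.sums[OF bounded_bilinear.bounded_linear_left[OF bb_mm] mexp_sums])
  have eq: "(\<lambda>k. A ** ((1 / fact k) *\<^sub>R matpow (c *\<^sub>R A) k)) = (\<lambda>k. ((1 / fact k) *\<^sub>R matpow (c *\<^sub>R A) k) ** A)"
  proof
    fix k
    have "A ** ((1 / fact k) *\<^sub>R matpow (c *\<^sub>R A) k) = (c ^ k / fact k) *\<^sub>R (A ** matpow A k)"
      unfolding matpow_scaleR by (simp add: matrix_scalar_ac scalar_matrix_assoc)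
    also have "\<dots> = (c ^ k / fact k) *\<^sub>R (matpow A k ** A)" by (simp only: matpow_comm)
    also have "\<dots> = ((1 / fact k) *\<^sub>R matpow (c *\<^sub>R A) k) ** A"
      unfolding matpow_scaleR by (simp add: scalar_matrix_assoc)
    finally show "A ** ((1 / fact k) *\<^sub>R matpow (c *\<^sub>R A) k) = ((1 / fact k) *\<^sub>R matpow (c *\<^sub>R A) k) ** A" .
  qed
  from s1 have "(\<lambda>k. ((1 / fact k) *\<^sub>R matpow (c *\<^sub>R A) k) ** A) sums (A ** mexp (c *\<^sub>R A))"
    by (simp only: eq)
  from sums_unique2[OF this s2] show ?thesis .
qed

lemma mexp_cont: "continuous_on UNIV (mexp :: real^'n^'n \<Rightarrow> _)"
proof -
  have "continuous_on (cball 0 r) (mexp :: real^'n^'n \<Rightarrow> _)" for r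
  proof -
    obtain K where K: "0 < K \<and> (\<forall>(a::real^'n^'n) (b::real^'n^'n). norm (a ** b) \<le> norm a * norm b * K)" using mbound_ex by blast
    have U: "uniform_limit (cball 0 r) (\<lambda>n A. \<Sum>i<n. (1 / fact i) *\<^sub>R matpow (A::real^'n^'n) i)
           (\<lambda>A. suminf (\<lambda>i. (1 / fact i) *\<^sub>R matpow A i)) sequentially"
    proof (rule Weierstrass_m_test[OF mexp_term_bound summable_bound])
      show "0 < K" using K by blast
      show "norm (a ** b) \<le> norm a * norm b * K" for a b :: "real^'n^'n" using K by blast
      show "norm x \<le> r" if "x \<in> cball 0 r" for x :: "real^'n^'n" using that by simp
    qed
    have C: "continuous_on (cball 0 r) (\<lambda>A. \<Sum>i<n. (1 / fact i) *\<^sub>R matpow (A::real^'n^'n) i)" for n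
      by (intro continuous_on_sum continuous_on_scaleR continuous_on_const matpow_cont)
    show ?thesis unfolding mexp_def[abs_def]
      by (rule uniform_limit_theorem[OF _ U]) (auto intro!: always_eventually C)
  qed
  note C = this
  have "isCont mexp (z::real^'n^'n)" for z
  proof -
    have "continuous_on (ball 0 (norm z + 1)) (mexp :: real^'n^'n \<Rightarrow> _)"
      by (rule continuous_on_subset[OF C ball_subset_cball])
    then have "\<forall>y\<in>ball (0::real^'n^'n) (norm z + 1). isCont mexp y"
      by (subst (asm) continuous_on_eq_continuous_at[OF open_ball])
    moreover have "z \<in> ball 0 (norm z + 1)" by simp
    ultimately show ?thesis by blast
  qed
  then show ?thesis by (simp add: continuous_at_imp_continuous_on)
qed


lemma term_deriv:
  "((\<lambda>s::real. (s ^ n / fact n) *\<^sub>R (P::real^'n^'n)) has_derivative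
      (\<lambda>h. h *\<^sub>R ((of_nat n * x ^ (n - 1) / fact n) *\<^sub>R P))) (at x within S)"
  by (auto intro!: derivative_eq_intros simp: fun_eq_iff)

lemma mexp_scaled_sums: "(\<lambda>j. (x ^ j / fact j) *\<^sub>R matpow (A::real^'n^'n) j) sums mexp (x *\<^sub>R A)"
  using mexp_sums[of "x *\<^sub>R A"] by (simp add: matpow_scaleR)

lemma mexp_scaled_unif:
  "uniform_limit (ball t 1) (\<lambda>n x. \<Sum>j<n. (x ^ j / fact j) *\<^sub>R matpow (A::real^'n^'n) j)
      (\<lambda>x. mexp (x *\<^sub>R A)) sequentially"
proof -
  obtain K where K: "0 < K \<and> (\<forall>(a::real^'n^'n) (b::real^'n^'n). norm (a ** b) \<le> norm a * norm b * K)" using mbound_ex by blast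
  have "uniform_limit (ball t 1) (\<lambda>n x. \<Sum>j<n. (1 / fact j) *\<^sub>R matpow (x *\<^sub>R A) j)
      (\<lambda>x. suminf (\<lambda>j. (1 / fact j) *\<^sub>R matpow (x *\<^sub>R A) j)) sequentially"
  proof (rule Weierstrass_m_test[OF mexp_term_bound summable_bound])
    fix n x assume "x \<in> ball t (1::real)"
    then have "\<bar>x\<bar> \<le> \<bar>t\<bar> + 1" by (auto simp: dist_real_def)
    then show "norm (x *\<^sub>R A) \<le> (\<bar>t\<bar> + 1) * norm A"
      by (simp add: mult_right_mono)
  qed (use K in auto)
  then show ?thesis by (simp add: matpow_scaleR mexp_def)
qed

lemma mexp_deriv: "((\<lambda>s. mexp (s *\<^sub>R A)) has_vector_derivative (A ** mexp (t *\<^sub>R (A::real^'n^'n)))) (at t)"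
proof -
  define f where "f = (\<lambda>n (s::real). (s ^ n / fact n) *\<^sub>R matpow A n)"
  define f' where "f' = (\<lambda>n (s::real) (h::real). h *\<^sub>R ((of_nat n * s ^ (n - 1) / fact n) *\<^sub>R matpow A n))"
  define g' where "g' = (\<lambda>(x::real) (h::real). h *\<^sub>R (A ** mexp (x *\<^sub>R A)))"
  have U: "uniform_limit (ball t 1) (\<lambda>n x. \<Sum>i<n. (of_nat i * x ^ (i - 1) / fact i) *\<^sub>R matpow A i)
      (\<lambda>x. A ** mexp (x *\<^sub>R A)) sequentially"
  proof -
    have "uniform_limit (ball t 1) (\<lambda>n x. A ** (\<Sum>j<n. (x ^ j / fact j) *\<^sub>R matpow (A::real^'n^'n) j))
      (\<lambda>x. A ** mexp (x *\<^sub>R A)) sequentially"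
      by (rule bounded_linear.uniform_limit[OF bounded_bilinear.bounded_linear_right[OF bb_mm] mexp_scaled_unif])
    moreover have "A ** (\<Sum>j<n. (x ^ j / fact j) *\<^sub>R matpow (A::real^'n^'n) j) =
        (\<Sum>i<Suc n. (of_nat i * x ^ (i - 1) / fact i) *\<^sub>R matpow A i)" for n x
    proof -
      have "A ** (\<Sum>j<n. (x ^ j / fact j) *\<^sub>R matpow (A::real^'n^'n) j) =
          (\<Sum>j<n. A ** ((x ^ j / fact j) *\<^sub>R matpow (A::real^'n^'n) j))"
        by (induction n) (simp_all add: matrix_add_ldistrib)
      also have "\<dots> = (\<Sum>j<n. (of_nat (Suc j) * x ^ (Suc j - 1) / fact (Suc j)) *\<^sub>R matpow A (Suc j))"
        proof (intro sum.cong refl)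
        fix j
        have c: "of_nat (Suc j) * x ^ (Suc j - 1) / fact (Suc j) = x ^ j / (fact j :: real)"
          by (simp add: fact_Suc del: of_nat_Suc)
        show "A ** ((x ^ j / fact j) *\<^sub>R matpow (A::real^'n^'n) j) =
          (of_nat (Suc j) * x ^ (Suc j - 1) / fact (Suc j)) *\<^sub>R matpow A (Suc j)"
          unfolding c by (simp add: matrix_scalar_ac scalar_matrix_assoc[symmetric])
      qed
      also have "\<dots> = (\<Sum>i<Suc n. (of_nat i * x ^ (i - 1) / fact i) *\<^sub>R matpow A i)"
        by (subst sum.lessThan_Suc_shift) simp
      finally show ?thesis .
    qed
    ultimately have "uniform_limit (ball t 1) (\<lambda>n x. \<Sum>i<Suc n. (of_nat i * x ^ (i - 1) / fact i) *\<^sub>R matpow A i)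
      (\<lambda>x. A ** mexp (x *\<^sub>R A)) sequentially" by simp
    then show ?thesis
      unfolding filterlim_sequentially_Suc[symmetric, where f="\<lambda>n x. \<Sum>i<n. (of_nat i * x ^ (i - 1) / fact i) *\<^sub>R matpow A i"]
      by simp
  qed
  have "\<exists>g. \<forall>x\<in>ball t 1. (\<lambda>n. f n x) sums (g x) \<and> (g has_derivative g' x) (at x within ball t 1)"
  proof (rule has_derivative_series)
    show "convex (ball t (1::real))" by simp
    show "t \<in> ball t 1" by simp
    show "(\<lambda>n. f n t) sums mexp (t *\<^sub>R A)" unfolding f_def by (rule mexp_scaled_sums)
    show "(f n has_derivative f' n x) (at x within ball t 1)" for n x
      unfolding f_def f'_def by (rule term_deriv)
    show "\<forall>\<^sub>F n in sequentially. \<forall>x\<in>ball t 1. \<forall>h. norm (sum (\<lambda>i. f' i x h) {..<n} - g' x h) \<le> e * norm h"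
      if "e > 0" for e
    proof -
      from U that have "\<forall>\<^sub>F n in sequentially. \<forall>x\<in>ball t 1.
          dist (\<Sum>i<n. (of_nat i * x ^ (i - 1) / fact i) *\<^sub>R matpow A i) (A ** mexp (x *\<^sub>R A)) < e"
        unfolding uniform_limit_iff by blast
      then show ?thesis
      proof eventually_elim
        case (elim n)
        show ?case
        proof (intro ballI allI)
          fix x h assume x: "x \<in> ball t 1"
          have "sum (\<lambda>i. f' i x h) {..<n} - g' x h =
             h *\<^sub>R ((\<Sum>i<n. (of_nat i * x ^ (i - 1) / fact i) *\<^sub>R matpow A i) - A ** mexp (x *\<^sub>R A))"
            unfolding f'_def g'_def by (simp add: scaleR_sum_right scaleR_diff_right)
          then have "norm (sum (\<lambda>i. f' i x h) {..<n} - g' x h) = norm h *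
              dist (\<Sum>i<n. (of_nat i * x ^ (i - 1) / fact i) *\<^sub>R matpow A i) (A ** mexp (x *\<^sub>R A))"
            by (simp add: dist_norm)
          also have "\<dots> \<le> norm h * e"
          proof (rule mult_left_mono[OF less_imp_le])
            show "dist (\<Sum>i<n. (of_nat i * x ^ (i - 1) / fact i) *\<^sub>R matpow A i) (A ** mexp (x *\<^sub>R A)) < e"
              using elim x by blast
          qed simp
          finally show "norm (sum (\<lambda>i. f' i x h) {..<n} - g' x h) \<le> e * norm h" by (simp add: mult.commute)
        qed
      qed
    qed
  qed
  then obtain g where g: "\<And>x. x \<in> ball t 1 \<Longrightarrow> (\<lambda>n. f n x) sums (g x) \<and> (g has_derivative g' x) (at x within ball t 1)"
    by blast
  have eq: "g x = mexp (x *\<^sub>R A)" if "x \<in> ball t 1" for x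
    using g[OF that] mexp_scaled_sums[of x A] sums_unique2 unfolding f_def by blast
  have "(g has_derivative g' t) (at t)"
    using g[of t] at_within_open[of t "ball t 1"] by auto
  then have "((\<lambda>s. mexp (s *\<^sub>R A)) has_derivative g' t) (at t)"
    by (rule has_derivative_transform_within_open[OF _ open_ball centre_in_ball[THEN iffD2, OF zero_less_one]]) (use eq in auto)
  then show ?thesis unfolding has_vector_derivative_def g'_def .
qed



lemma mexp_inv: "mexp (- A) ** mexp (A::real^'n^'n) = mat 1"
proof -
  define \<Psi> where "\<Psi> = (\<lambda>s::real. mexp (s *\<^sub>R (- A)) ** mexp (s *\<^sub>R A))"
  have d: "(\<Psi> has_derivative (\<lambda>h. 0)) (at s within UNIV)" for s
  proof -
    have "(\<Psi> has_vector_derivative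
      (mexp (s *\<^sub>R (- A)) ** (A ** mexp (s *\<^sub>R A)) + ((- A) ** mexp (s *\<^sub>R (- A))) ** mexp (s *\<^sub>R A))) (at s)"
      unfolding \<Psi>_def by (rule bounded_bilinear.has_vector_derivative[OF bb_mm mexp_deriv mexp_deriv])
    moreover have "mexp (s *\<^sub>R (- A)) ** (A ** mexp (s *\<^sub>R A)) + ((- A) ** mexp (s *\<^sub>R (- A))) ** mexp (s *\<^sub>R A) = 0"
    proof -
      have c: "(- A) ** mexp (s *\<^sub>R (- A)) = mexp (s *\<^sub>R (- A)) ** (- A)" by (rule mexp_comm)
      have n1: "(- X) ** Y = - (X ** Y)" for X Y :: "real^'n^'n"
        by (rule bounded_bilinear.minus_left[OF bb_mm])
      have "((- A) ** mexp (s *\<^sub>R (- A))) ** mexp (s *\<^sub>R A) = mexp (s *\<^sub>R (- A)) ** ((- A) ** mexp (s *\<^sub>R A))"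
        unfolding c by (rule matrix_mul_assoc[symmetric])
      also have "\<dots> = - (mexp (s *\<^sub>R (- A)) ** (A ** mexp (s *\<^sub>R A)))"
        unfolding n1 by (rule bounded_bilinear.minus_right[OF bb_mm])
      finally show ?thesis by simp
    qed
    ultimately show ?thesis by (simp add: has_vector_derivative_def)
  qed
  obtain c where "\<forall>x\<in>UNIV. \<Psi> x = c"
    using has_derivative_zero_constant[of UNIV \<Psi>] d by auto
  then have "\<Psi> 1 = \<Psi> 0" by simp
  then show ?thesis by (simp add: \<Psi>_def mexp_zero)
qed

lemma mexp_inv': "mexp A ** mexp (- (A::real^'n^'n)) = mat 1"
  using mexp_inv[of "- A"] by simp

fun Gb :: "(real^'n^'n) set \<Rightarrow> real \<Rightarrow> nat \<Rightarrow> (real^'n^'n) set" where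
  "Gb T M 0 = {mat 1}"
| "Gb T M (Suc L) = {mexp A ** g | A g. A \<in> T \<and> norm A \<le> M \<and> g \<in> Gb T M L}"

lemma Gb_SucI: "A \<in> T \<Longrightarrow> norm A \<le> M \<Longrightarrow> g \<in> Gb T M L \<Longrightarrow> mexp A ** g \<in> Gb T M (Suc L)"
  by (simp only: Gb.simps) blast

lemma Gb_SucE: "h \<in> Gb T M (Suc L) \<Longrightarrow> (\<And>A g. h = mexp A ** g \<Longrightarrow> A \<in> T \<Longrightarrow> norm A \<le> M \<Longrightarrow> g \<in> Gb T M L \<Longrightarrow> P) \<Longrightarrow> P"
  by (simp only: Gb.simps) blast

declare Gb.simps(2)[simp del]

lemma Gb_mono_M: "M \<le> M' \<Longrightarrow> Gb T M L \<subseteq> Gb T M' L"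
proof (induction L)
  case 0 then show ?case by simp
next
  case (Suc L)
  show ?case
  proof
    fix h assume "h \<in> Gb T M (Suc L)"
    then show "h \<in> Gb T M' (Suc L)"
      by (rule Gb_SucE) (use Suc in \<open>auto intro!: Gb_SucI\<close>)
  qed
qed

lemma Gb_pad: "subspace T \<Longrightarrow> 0 \<le> M \<Longrightarrow> Gb T M L \<subseteq> Gb T M (Suc L)"
proof
  fix g assume "subspace T" "0 \<le> M" "g \<in> Gb T M L"
  then have "mexp 0 ** g \<in> Gb T M (Suc L)" by (intro Gb_SucI) (auto simp: subspace_0)
  then show "g \<in> Gb T M (Suc L)" by (simp add: mexp_zero)
qed

lemma Gb_mono_L: "subspace T \<Longrightarrow> 0 \<le> M \<Longrightarrow> L \<le> L' \<Longrightarrow> Gb T M L \<subseteq> Gb T M L'"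
proof -
  assume a: "subspace T" "0 \<le> M" "L \<le> L'"
  show ?thesis using a(3)
  proof (induction rule: dec_induct)
    case base then show ?case by simp
  next
    case (step n) then show ?case using Gb_pad[OF a(1,2), of n] by blast
  qed
qed

lemma Gb_mono: "subspace T \<Longrightarrow> 0 \<le> M \<Longrightarrow> M \<le> M' \<Longrightarrow> L \<le> L' \<Longrightarrow> Gb T M L \<subseteq> Gb T M' L'"
  using Gb_mono_M Gb_mono_L[of T M' L L'] by (meson order_trans subset_trans)

lemma Gb_mult: "g \<in> Gb T M L1 \<Longrightarrow> h \<in> Gb T M L2 \<Longrightarrow> g ** h \<in> Gb T M (L1 + L2)"
proof (induction L1 arbitrary: g)
  case 0 then show ?case by simp
next
  case (Suc L1)
  then obtain A g0 where "g = mexp A ** g0" "A \<in> T" "norm A \<le> M" "g0 \<in> Gb T M L1" by (auto elim: Gb_SucE)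
  with Suc.IH[of g0] Suc.prems show ?case
    by (auto simp: matrix_mul_assoc[symmetric] intro!: Gb_SucI)
qed

lemma Gb_one: "A \<in> T \<Longrightarrow> norm A \<le> M \<Longrightarrow> mexp A \<in> Gb T M 1"
  using Gb_SucI[of A T M "mat 1" 0] by simp

lemma Gb_inv: "subspace T \<Longrightarrow> g \<in> Gb T M L \<Longrightarrow> \<exists>g'\<in>Gb T M L. g' ** g = mat 1 \<and> g ** g' = mat 1"
proof (induction L arbitrary: g)
  case 0 then show ?case by simp
next
  case (Suc L)
  then obtain A g0 where g: "g = mexp A ** g0" "A \<in> T" "norm A \<le> M" "g0 \<in> Gb T M L" by (auto elim: Gb_SucE)
  then obtain g0' where g0': "g0' \<in> Gb T M L" "g0' ** g0 = mat 1" "g0 ** g0' = mat 1"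
    using Suc by blast
  have "mexp (- A) \<in> Gb T M 1" using g Suc.prems by (intro Gb_one) (auto simp: subspace_neg)
  from Gb_mult[OF g0'(1) this] have "g0' ** mexp (- A) \<in> Gb T M (Suc L)" by simp
  moreover have "(g0' ** mexp (- A)) ** g = mat 1"
    unfolding g(1) using g0'(2) mexp_inv[of A] by (simp add: matrix_mul_assoc[symmetric]) (simp add: matrix_mul_assoc)
  moreover have "g ** (g0' ** mexp (- A)) = mat 1"
    unfolding g(1) using g0'(3) mexp_inv'[of A] by (simp add: matrix_mul_assoc[symmetric]) (simp add: matrix_mul_assoc)
  ultimately show ?case by blast
qed

lemma Gb_group: "g \<in> lie_group_of T \<Longrightarrow> \<exists>L M. 0 \<le> M \<and> g \<in> Gb T M L"
proof (induction rule: lie_group_of.induct)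
  case id
  then show ?case by (auto intro!: exI[of _ 0])
next
  case (step A g)
  then obtain L M where "0 \<le> M" "g \<in> Gb T M L" by auto
  then have "g \<in> Gb T (max M (norm A)) L" using Gb_mono_M by (meson max.cobounded1 subsetD)
  then have "mexp A ** g \<in> Gb T (max M (norm A)) (Suc L)" using step by (auto intro!: Gb_SucI)
  then show ?case by (meson max.coboundedI1 \<open>0 \<le> M\<close>)
qed

lemma Gb_compact: "closed T \<Longrightarrow> compact (Gb T M L)"
proof (induction L)
  case 0 then show ?case by simp
next
  case (Suc L)
  let ?f = "\<lambda>p::(real^'n^'n) \<times> (real^'n^'n). mexp (fst p) ** snd p"
  have eq: "Gb T M (Suc L) = ?f ` ((T \<inter> cball 0 M) \<times> Gb T M L)"
  proof
    show "Gb T M (Suc L) \<subseteq> ?f ` ((T \<inter> cball 0 M) \<times> Gb T M L)"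
    proof
      fix h assume "h \<in> Gb T M (Suc L)"
      then obtain A g where "h = mexp A ** g" "A \<in> T" "norm A \<le> M" "g \<in> Gb T M L"
        by (rule Gb_SucE)
      then show "h \<in> ?f ` ((T \<inter> cball 0 M) \<times> Gb T M L)"
        by (intro image_eqI[where x="(A, g)"]) auto
    qed
    show "?f ` ((T \<inter> cball 0 M) \<times> Gb T M L) \<subseteq> Gb T M (Suc L)"
      by (auto intro!: Gb_SucI)
  qed
  have K: "compact ((T \<inter> cball 0 M) \<times> Gb T M L)"
    using Suc by (intro compact_Times closed_Int_compact) auto
  have c1: "continuous_on UNIV (\<lambda>p::(real^'n^'n) \<times> (real^'n^'n). mexp (fst p))"
    by (rule continuous_on_compose2[OF mexp_cont continuous_on_fst[OF continuous_on_id]]) simp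
  have C: "continuous_on UNIV ?f"
    by (rule bounded_bilinear.continuous_on[OF bb_mm c1 continuous_on_snd[OF continuous_on_id]])
  show ?case unfolding eq
    by (rule compact_continuous_image[OF continuous_on_subset[OF C subset_UNIV] K])
qed



lemma ode_unit:
  assumes T: "subspace T" and M: "0 \<le> M"
  shows "g \<in> Gb T M L \<Longrightarrow> \<exists>R \<Phi>. \<Phi> 0 = mat 1 \<and> \<Phi> (real L) = g \<and> continuous_on {0..real L} \<Phi> \<and>
      (\<forall>t\<in>{0..real L}. R t \<in> T \<and> norm (R t) \<le> M) \<and>
      (\<forall>t\<in>{0<..<real L} - real ` {..L}. (\<Phi> has_vector_derivative (R t ** \<Phi> t)) (at t))"
proof (induction L arbitrary: g)
  case 0
  then have "g = mat 1" by simp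
  then show ?case using T M
    by (intro exI[of _ "\<lambda>_. 0"] exI[of _ "\<lambda>_. mat 1"]) (auto simp: subspace_0)
next
  case (Suc L)
  then obtain A g0 where g: "g = mexp A ** g0" "A \<in> T" "norm A \<le> M" "g0 \<in> Gb T M L"
    by (auto elim: Gb_SucE)
  then obtain R0 \<Phi>0 where IH: "\<Phi>0 0 = mat 1" "\<Phi>0 (real L) = g0" "continuous_on {0..real L} \<Phi>0"
      "\<forall>t\<in>{0..real L}. R0 t \<in> T \<and> norm (R0 t) \<le> M"
      "\<forall>t\<in>{0<..<real L} - real ` {..L}. (\<Phi>0 has_vector_derivative (R0 t ** \<Phi>0 t)) (at t)"
    using Suc.IH by blast
  define \<Phi> where "\<Phi> = (\<lambda>t. if t \<le> real L then \<Phi>0 t else mexp ((t - real L) *\<^sub>R A) ** g0)"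
  define R where "R = (\<lambda>t. if t \<le> real L then R0 t else A)"
  have "\<Phi> 0 = mat 1" using IH by (simp add: \<Phi>_def)
  moreover have "\<Phi> (real (Suc L)) = g" by (simp add: \<Phi>_def g)
  moreover have "continuous_on {0..real (Suc L)} \<Phi>"
    unfolding \<Phi>_def
  proof (rule continuous_on_cases_le[where h="\<lambda>t. t", OF _ _ continuous_on_id])
    show "continuous_on {t \<in> {0..real (Suc L)}. t \<le> real L} \<Phi>0"
      by (rule continuous_on_subset[OF IH(3)]) auto
    show "continuous_on {t \<in> {0..real (Suc L)}. real L \<le> t} (\<lambda>t. mexp ((t - real L) *\<^sub>R A) ** g0)"
      by (intro bounded_bilinear.continuous_on[OF bb_mm] continuous_on_compose2[OF mexp_cont]
          continuous_intros) auto
    show "\<And>t. t \<in> {0..real (Suc L)} \<Longrightarrow> t = real L \<Longrightarrow> \<Phi>0 t = mexp ((t - real L) *\<^sub>R A) ** g0"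
      using IH(2) by (simp add: mexp_zero)
  qed
  moreover have "\<forall>t\<in>{0..real (Suc L)}. R t \<in> T \<and> norm (R t) \<le> M"
    using IH(4) g by (auto simp: R_def)
  moreover have "\<forall>t\<in>{0<..<real (Suc L)} - real ` {..Suc L}. (\<Phi> has_vector_derivative (R t ** \<Phi> t)) (at t)"
  proof
    fix t assume t: "t \<in> {0<..<real (Suc L)} - real ` {..Suc L}"
    then have tL: "t \<noteq> real L" by auto
    show "(\<Phi> has_vector_derivative (R t ** \<Phi> t)) (at t)"
    proof (cases "t < real L")
      case True
      then have "t \<in> {0<..<real L} - real ` {..L}" using t by auto
      then have d: "(\<Phi>0 has_vector_derivative (R0 t ** \<Phi>0 t)) (at t)" using IH(5) by blast
      have "(\<Phi> has_vector_derivative (R0 t ** \<Phi>0 t)) (at t)"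
        by (rule has_vector_derivative_transform_within_open[OF d, of "{..<real L}"])
           (use True in \<open>auto simp: \<Phi>_def\<close>)
      then show ?thesis using True by (simp add: \<Phi>_def R_def)
    next
      case False
      then have tg: "t > real L" using tL by auto
      have d1: "((\<lambda>s. mexp ((s - real L) *\<^sub>R A)) has_vector_derivative (A ** mexp ((t - real L) *\<^sub>R A))) (at t)"
      proof -
        have "((\<lambda>s. s - real L) has_vector_derivative 1) (at t)"
          by (auto intro!: derivative_eq_intros)
        from vector_diff_chain_at[OF this mexp_deriv[of A "t - real L"]]
        show ?thesis by (simp add: o_def)
      qed
      have d2: "((\<lambda>s. mexp ((s - real L) *\<^sub>R A) ** g0) has_vector_derivative (A ** mexp ((t - real L) *\<^sub>R A)) ** g0) (at t)"
        using bounded_bilinear.has_vector_derivative[OF bb_mm d1 has_vector_derivative_const[of g0]]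
        by simp
      have "(\<Phi> has_vector_derivative (A ** mexp ((t - real L) *\<^sub>R A)) ** g0) (at t)"
        by (rule has_vector_derivative_transform_within_open[OF d2, of "{real L<..}"])
           (use tg in \<open>auto simp: \<Phi>_def\<close>)
      then show ?thesis using tg by (simp add: \<Phi>_def R_def matrix_mul_assoc)
    qed
  qed
  ultimately show ?case by blast
qed

lemma ode_final:
  assumes T: "subspace T" and M: "0 \<le> M" and g: "g \<in> Gb T M L"
  shows "\<exists>R \<Phi>. (\<forall>t\<in>{0..1}. R t \<in> T \<and> norm (R t) \<le> real L * M + 1) \<and>
           fundamental_solution R \<Phi> \<and> \<Phi> 1 = g"
proof (cases "L = 0")
  case True
  then have "g = mat 1" using g by simp
  then show ?thesis using T M
    by (intro exI[of _ "\<lambda>_. 0"] exI[of _ "\<lambda>_. mat 1"])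
       (auto simp: subspace_0 fundamental_solution_def)
next
  case False
  then have Lpos: "real L > 0" by simp
  obtain R \<Phi> where P: "\<Phi> 0 = mat 1" "\<Phi> (real L) = g" "continuous_on {0..real L} \<Phi>"
      "\<forall>t\<in>{0..real L}. R t \<in> T \<and> norm (R t) \<le> M"
      "\<forall>t\<in>{0<..<real L} - real ` {..L}. (\<Phi> has_vector_derivative (R t ** \<Phi> t)) (at t)"
    using ode_unit[OF T M g] by blast
  define R' where "R' = (\<lambda>t. real L *\<^sub>R R (real L * t))"
  define \<Phi>' where "\<Phi>' = (\<lambda>t. \<Phi> (real L * t))"
  have "\<forall>t\<in>{0..1}. R' t \<in> T \<and> norm (R' t) \<le> real L * M + 1"
  proof
    fix t :: real assume t: "t \<in> {0..1}"
    then have "real L * t \<in> {0..real L}" using Lpos by (auto simp: mult_le_cancel_left1)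
    then have r: "R (real L * t) \<in> T" "norm (R (real L * t)) \<le> M" using P(4) by auto
    have "norm (R' t) = real L * norm (R (real L * t))" by (simp add: R'_def)
    also have "\<dots> \<le> real L * M" using r Lpos by (intro mult_left_mono) auto
    finally show "R' t \<in> T \<and> norm (R' t) \<le> real L * M + 1"
      using r T by (auto simp: R'_def subspace_scale)
  qed
  moreover have "fundamental_solution R' \<Phi>'"
    unfolding fundamental_solution_def
  proof
    fix \<tau> :: real assume \<tau>: "\<tau> \<in> {0..1}"
    define S where "S = (\<lambda>x. x / real L) ` real ` {..L}"
    have "((\<lambda>s. R' s ** \<Phi>' s) has_integral (\<Phi>' \<tau> - \<Phi>' 0)) {0..\<tau>}"
    proof (rule fundamental_theorem_of_calculus_interior_strong[of S])
      show "finite S" by (simp add: S_def)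
      show "0 \<le> \<tau>" using \<tau> by simp
      show "continuous_on {0..\<tau>} \<Phi>'"
        unfolding \<Phi>'_def
        by (rule continuous_on_compose2[OF P(3)]) (use \<tau> Lpos in \<open>auto intro!: continuous_intros simp: mult_le_cancel_left1\<close>)
      fix x assume x: "x \<in> {0<..<\<tau>} - S"
      have y: "real L * x \<in> {0<..<real L} - real ` {..L}"
      proof -
        have "real L * x < real L" using x \<tau> Lpos by (auto simp: mult_less_cancel_left1)
        moreover have "real L * x \<notin> real ` {..L}"
        proof
          assume "real L * x \<in> real ` {..L}"
          then obtain k where "k \<le> L" "real L * x = real k" by auto
          then have "x = real k / real L" using Lpos by (auto simp: field_simps)
          then show False using x \<open>k \<le> L\<close> by (auto simp: S_def)
        qed
        ultimately show ?thesis using x Lpos by auto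
      qed
      have d: "(\<Phi> has_vector_derivative (R (real L * x) ** \<Phi> (real L * x))) (at (real L * x))"
        using P(5) y by blast
      have "((\<lambda>x. real L * x) has_vector_derivative real L) (at x)"
        by (auto intro!: derivative_eq_intros)
      from vector_diff_chain_at[OF this d]
      show "(\<Phi>' has_vector_derivative R' x ** \<Phi>' x) (at x)"
        by (simp add: o_def \<Phi>'_def R'_def scalar_matrix_assoc)
    qed
    then show "((\<lambda>s. R' s ** \<Phi>' s) has_integral (\<Phi>' \<tau> - mat 1)) {0..\<tau>}"
      by (simp add: \<Phi>'_def P(1))
  qed
  moreover have "\<Phi>' 1 = g" by (simp add: \<Phi>'_def P(2))
  ultimately show ?thesis by blast
qed



lemma proj_eqI: "x \<noteq> 0 \<Longrightarrow> y \<noteq> 0 \<Longrightarrow> c \<noteq> 0 \<Longrightarrow> x = c *\<^sub>R y \<Longrightarrow> proj_eq x y"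
  unfolding proj_eq_def by blast

lemma proj_eqI': "y \<noteq> 0 \<Longrightarrow> c \<noteq> 0 \<Longrightarrow> x = c *\<^sub>R y \<Longrightarrow> proj_eq x y"
  unfolding proj_eq_def by auto

lemma cont_mv_left: "continuous_on S (\<lambda>A::real^'n^'n. A *v w)"
proof -
  have "linear (\<lambda>A::real^'n^'n. A *v w)"
    by (rule linearI) (simp_all add: matrix_vector_mult_add_rdistrib scaleR_matrix_vector_assoc)
  then show ?thesis
    by (intro linear_continuous_on) (simp add: linear_conv_bounded_linear)
qed

lemma cont_mv_right: "continuous_on S (\<lambda>v::real^'n. A *v v)"
  by (intro linear_continuous_on matrix_vector_mul_bounded_linear)

definition Lam :: "nat \<Rightarrow> real set" where
  "Lam N = cball 0 (real N) - ball 0 (1 / (real N + 1))"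

definition SS :: "(real^'n^'n) set \<Rightarrow> real^'n \<Rightarrow> nat \<Rightarrow> (real^'n) set" where
  "SS T w N = (\<lambda>p. snd p *\<^sub>R (fst p *v w)) ` (Gb T (real N) N \<times> Lam N)"

lemma SS_compact: "closed T \<Longrightarrow> compact (SS T (w::real^'n) N)"
proof -
  assume T: "closed T"
  have "compact (Lam N)" unfolding Lam_def
    by (rule compact_diff) auto
  then have K: "compact (Gb T (real N) N \<times> Lam N)"
    using Gb_compact[OF T] by (intro compact_Times) auto
  have C: "continuous_on UNIV (\<lambda>p::(real^'n^'n) \<times> real. snd p *\<^sub>R (fst p *v w))"
    by (intro continuous_on_scaleR continuous_on_snd continuous_on_id
         continuous_on_compose2[OF cont_mv_left continuous_on_fst[OF continuous_on_id]]) auto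
  show ?thesis unfolding SS_def
    by (rule compact_continuous_image[OF continuous_on_subset[OF C subset_UNIV] K])
qed

lemma SS_cover:
  assumes acc: "accessible T" and w: "w \<noteq> 0" and x: "x \<noteq> 0"
  shows "\<exists>N. x \<in> SS T w N"
proof -
  from acc have T: "subspace T" unfolding accessible_def lie_subalgebra_def by blast
  from acc w x obtain g where g: "g \<in> lie_group_of T" "proj_eq (g *v w) x"
    unfolding accessible_def by blast
  then obtain c where c: "c \<noteq> 0" "g *v w = c *\<^sub>R x" unfolding proj_eq_def by blast
  obtain L M where LM: "0 \<le> M" "g \<in> Gb T M L" using Gb_group[OF g(1)] by blast
  define N where "N = nat (ceiling (M + \<bar>c\<bar> + \<bar>1 / c\<bar>)) + L + 1"
  have N1: "M \<le> real N" "\<bar>c\<bar> \<le> real N" "\<bar>1/c\<bar> \<le> real N" "L \<le> N" "1 \<le> N"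
    unfolding N_def using LM(1) by linarith+
  have "g \<in> Gb T (real N) N" using Gb_mono[OF T LM(1) N1(1) N1(4)] LM(2) by blast
  moreover have "1 / c \<in> Lam N"
  proof -
    have "1 / (real N + 1) \<le> \<bar>1 / c\<bar>"
      using N1(2) c(1) by (simp add: abs_divide divide_simps)
    then show ?thesis unfolding Lam_def using N1(3) by (auto simp: dist_norm)
  qed
  moreover have "x = (1 / c) *\<^sub>R (g *v w)" using c by simp
  ultimately have "x \<in> SS T w N" unfolding SS_def by (intro image_eqI[where x="(g, 1/c)"]) auto
  then show ?thesis by blast
qed

lemma SS_interior:
  assumes acc: "accessible T" and w: "w \<noteq> (0::real^'n)"
  shows "\<exists>N p e. 0 < e \<and> ball p e \<subseteq> SS T w N"
proof (rule ccontr)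
  assume H: "\<not> ?thesis"
  from acc have T: "subspace T" unfolding accessible_def lie_subalgebra_def by blast
  then have cT: "closed T" by (rule closed_subspace)
  have int: "interior (SS T w N) = {}" for N
  proof (rule ccontr)
    assume "interior (SS T w N) \<noteq> {}"
    then obtain p where "p \<in> interior (SS T w N)" by blast
    then obtain e where "0 < e" "ball p e \<subseteq> SS T w N" by (auto simp: mem_interior)
    then show False using H by blast
  qed
  let ?G = "insert {0} (range (SS T w))"
  have "euclidean interior_of \<Union> ?G = {}"
  proof (rule Baire_category_alt)
    show "countable ?G" by simp
    show "closedin euclidean S \<and> euclidean interior_of S = {}" if "S \<in> ?G" for S
    proof -
      have "closed S \<and> interior S = {}"
        using that int compact_imp_closed[OF SS_compact[OF cT]] by auto
      then show ?thesis by (simp only: closed_closedin[symmetric] euclidean_interior_of)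
    qed
  qed (rule disjI1, rule completely_metrizable_space_euclidean)
  moreover have "\<Union> ?G = UNIV"
  proof -
    have "x \<in> \<Union> ?G" for x
    proof (cases "x = 0")
      case True then show ?thesis by blast
    next
      case False
      then obtain N where "x \<in> SS T w N" using SS_cover[OF acc w False] by blast
      then show ?thesis by blast
    qed
    then show ?thesis by blast
  qed
  ultimately have "interior (UNIV::(real^'n) set) = {}" by (simp only: euclidean_interior_of)
  then show False by simp
qed

lemma SS_nonzero:
  assumes T: "subspace T" and w: "w \<noteq> 0" and q: "q \<in> SS T w N"
  shows "\<exists>g l. g \<in> Gb T (real N) N \<and> l \<noteq> 0 \<and> q = l *\<^sub>R (g *v w)"
proof -
  from q obtain g l where g: "g \<in> Gb T (real N) N" "l \<in> Lam N" "q = l *\<^sub>R (g *v w)"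
    unfolding SS_def by auto
  have "l \<noteq> 0"
  proof
    assume "l = 0"
    then have "0 \<in> ball (0::real) (1 / (real N + 1))" by simp
    then show False using g(2) \<open>l = 0\<close> unfolding Lam_def by blast
  qed
  then show ?thesis using g by blast
qed

lemma Gb_nonzero:
  assumes T: "subspace T" and g: "g \<in> Gb T M L" and w: "w \<noteq> 0"
  shows "g *v w \<noteq> 0"
proof
  assume "g *v w = 0"
  obtain g' where "g' ** g = mat 1" using Gb_inv[OF T g] by blast
  then have "w = g' *v (g *v w)" by (simp add: matrix_vector_mul_assoc)
  then show False using \<open>g *v w = 0\<close> w by simp
qed



lemma local_reach:
  assumes acc: "accessible T" and w: "w \<noteq> (0::real^'n)" and e: "0 < e"
    and B: "ball p e \<subseteq> SS T w N" and v: "v \<noteq> 0"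
  shows "\<exists>U n. open U \<and> v \<in> U \<and> (\<forall>v'\<in>U. v' \<noteq> 0 \<longrightarrow> (\<exists>g\<in>Gb T (real n) n. proj_eq (g *v w) v'))"
proof -
  from acc have T: "subspace T" unfolding accessible_def lie_subalgebra_def by blast
  have "p \<in> SS T w N" using B e by auto
  then obtain g0 l0 where "g0 \<in> Gb T (real N) N" "l0 \<noteq> 0" "p = l0 *\<^sub>R (g0 *v w)"
    using SS_nonzero[OF T w] by blast
  then have p: "p \<noteq> 0" using Gb_nonzero[OF T _ w] by auto
  from acc p v obtain h where h: "h \<in> lie_group_of T" "proj_eq (h *v p) v"
    unfolding accessible_def by blast
  then obtain \<mu> where mu: "\<mu> \<noteq> 0" "h *v p = \<mu> *\<^sub>R v" unfolding proj_eq_def by blast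
  obtain Lh Mh where LM: "0 \<le> Mh" "h \<in> Gb T Mh Lh" using Gb_group[OF h(1)] by blast
  obtain h' where h': "h' ** h = mat 1" "h ** h' = mat 1" using Gb_inv[OF T LM(2)] by blast
  define U where "U = (\<lambda>x. \<mu> *\<^sub>R (h' *v x)) -` ball p e"
  define n where "n = nat (ceiling Mh) + N + Lh"
  have "open U" unfolding U_def
    by (rule open_vimage) (auto intro!: continuous_intros cont_mv_right)
  moreover have "v \<in> U"
  proof -
    have "\<mu> *\<^sub>R (h' *v v) = h' *v (h *v p)" using mu by (simp add: matrix_vector_mult_scaleR)
    also have "\<dots> = p" using h'(1) by (simp add: matrix_vector_mul_assoc)
    finally show ?thesis unfolding U_def using e by simp
  qed
  moreover have "\<exists>g\<in>Gb T (real n) n. proj_eq (g *v w) v'" if v': "v' \<in> U" "v' \<noteq> 0" for v'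
  proof -
    define q where "q = \<mu> *\<^sub>R (h' *v v')"
    have "q \<in> SS T w N" using v' B unfolding U_def q_def by auto
    then obtain g l where gl: "g \<in> Gb T (real N) N" "l \<noteq> 0" "q = l *\<^sub>R (g *v w)"
      using SS_nonzero[OF T w] by blast
    have "(h ** g) *v w = h *v (g *v w)" by (simp add: matrix_vector_mul_assoc)
    also have "g *v w = (1 / l) *\<^sub>R q" using gl by simp
    also have "h *v ((1 / l) *\<^sub>R q) = (\<mu> / l) *\<^sub>R (h *v (h' *v v'))"
      unfolding q_def by (simp add: matrix_vector_mult_scaleR)
    also have "h *v (h' *v v') = v'" using h'(2) by (simp add: matrix_vector_mul_assoc)
    finally have eq: "(h ** g) *v w = (\<mu> / l) *\<^sub>R v'" .
    have "h ** g \<in> Gb T (max Mh (real N)) (Lh + N)"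
      using Gb_mult[OF subsetD[OF Gb_mono_M[of Mh "max Mh (real N)"] LM(2)]
                     subsetD[OF Gb_mono_M[of "real N" "max Mh (real N)"] gl(1)]] by simp
    moreover have "Gb T (max Mh (real N)) (Lh + N) \<subseteq> Gb T (real n) n"
      using LM(1) by (intro Gb_mono[OF T]) (auto simp: n_def, linarith)
    ultimately have "h ** g \<in> Gb T (real n) n" by blast
    moreover have "proj_eq ((h ** g) *v w) v'"
      by (rule proj_eqI'[OF v'(2) _ eq]) (use mu gl in simp)
    ultimately show ?thesis by blast
  qed
  ultimately show ?thesis by blast
qed

lemma uniform_reach:
  assumes acc: "accessible T" and w: "w \<noteq> (0::real^'n)"
  shows "\<exists>n. \<forall>v. v \<noteq> 0 \<longrightarrow> (\<exists>g\<in>Gb T (real n) n. proj_eq (g *v w) v)"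
proof -
  from acc have T: "subspace T" unfolding accessible_def lie_subalgebra_def by blast
  obtain N p e where Ne: "0 < e" "ball p e \<subseteq> SS T w N" using SS_interior[OF acc w] by blast
  have "\<forall>v\<in>sphere (0::real^'n) 1. \<exists>On. open (fst On) \<and> v \<in> fst On \<and>
      (\<forall>v'\<in>fst On. v' \<noteq> 0 \<longrightarrow> (\<exists>g\<in>Gb T (real (snd On)) (snd On). proj_eq (g *v w) v'))"
  proof
    fix v :: "real^'n" assume "v \<in> sphere 0 1"
    then have "v \<noteq> 0" by auto
    from local_reach[OF acc w Ne this] show "\<exists>On. open (fst On) \<and> v \<in> fst On \<and>
      (\<forall>v'\<in>fst On. v' \<noteq> 0 \<longrightarrow> (\<exists>g\<in>Gb T (real (snd On)) (snd On). proj_eq (g *v w) v'))"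
      by (metis fst_conv snd_conv)
  qed
  then obtain F where F: "\<And>v. v \<in> sphere (0::real^'n) 1 \<Longrightarrow> open (fst (F v)) \<and> v \<in> fst (F v) \<and>
      (\<forall>v'\<in>fst (F v). v' \<noteq> 0 \<longrightarrow> (\<exists>g\<in>Gb T (real (snd (F v))) (snd (F v)). proj_eq (g *v w) v'))"
    by metis
  obtain C where C: "C \<subseteq> sphere 0 1" "finite C" "sphere 0 1 \<subseteq> \<Union> ((\<lambda>v. fst (F v)) ` C)"
  proof (rule compactE_image[of "sphere (0::real^'n) 1" "sphere 0 1" "\<lambda>v. fst (F v)"])
    show "compact (sphere (0::real^'n) 1)" by simp
    show "\<And>v. v \<in> sphere 0 1 \<Longrightarrow> open (fst (F v))" using F by blast
    show "sphere 0 1 \<subseteq> (\<Union>v\<in>sphere 0 1. fst (F v))" using F by blast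
  qed blast
  define n where "n = Max (insert 0 ((\<lambda>v. snd (F v)) ` C))"
  have nge: "snd (F c) \<le> n" if "c \<in> C" for c
    unfolding n_def using C(2) that by (intro Max_ge) auto
  show ?thesis
  proof (intro exI allI impI)
    fix v :: "real^'n" assume v: "v \<noteq> 0"
    define u where "u = (1 / norm v) *\<^sub>R v"
    have u: "u \<in> sphere 0 1" "u \<noteq> 0" using v by (auto simp: u_def)
    then obtain c where c: "c \<in> C" "u \<in> fst (F c)" using C(3) by blast
    then obtain g where g: "g \<in> Gb T (real (snd (F c))) (snd (F c))" "proj_eq (g *v w) u"
      using F[of c] C(1) u(2) by blast
    have "g \<in> Gb T (real n) n"
      using subsetD[OF Gb_mono[OF T _ _ nge[OF c(1)]] g(1)] nge[OF c(1)] by simp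
    moreover have "proj_eq (g *v w) v"
    proof -
      obtain a where a: "a \<noteq> 0" "g *v w = a *\<^sub>R u" using g(2) unfolding proj_eq_def by blast
      have e: "g *v w = (a / norm v) *\<^sub>R v" using a by (simp add: u_def)
      show ?thesis by (rule proj_eqI'[OF v _ e]) (use a v in simp)
    qed
    ultimately show "\<exists>g\<in>Gb T (real n) n. proj_eq (g *v w) v" by blast
  qed
qed

theorem lemma3p6:
  fixes T :: "(real^'n^'n) set"
  assumes "accessible T"
  shows "\<exists>K>0. \<forall>u v :: real^'n. u \<noteq> 0 \<longrightarrow> v \<noteq> 0 \<longrightarrow>
           (\<exists>R \<Phi>. (\<forall>t\<in>{0..1}. R t \<in> T \<and> norm (R t) \<le> K) \<and>
                   fundamental_solution R \<Phi> \<and> proj_eq (\<Phi> 1 *v u) v)"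
proof -
  have T: "subspace T" using assms unfolding accessible_def lie_subalgebra_def by blast
  define w :: "real^'n" where "w = (\<chi> i. 1)"
  have w: "w \<noteq> 0" by (simp add: w_def vec_eq_iff)
  obtain n where n: "\<And>v. v \<noteq> 0 \<Longrightarrow> \<exists>g\<in>Gb T (real n) n. proj_eq (g *v w) v"
    using uniform_reach[OF assms w] by blast
  define K where "K = real (n + n) * real n + 1"
  have "K > 0" unfolding K_def by (intro add_nonneg_pos mult_nonneg_nonneg) auto
  moreover have "\<exists>R \<Phi>. (\<forall>t\<in>{0..1}. R t \<in> T \<and> norm (R t) \<le> K) \<and>
                   fundamental_solution R \<Phi> \<and> proj_eq (\<Phi> 1 *v u) v" if u: "u \<noteq> 0" and v: "v \<noteq> 0" for u v
  proof -
    obtain gu where gu: "gu \<in> Gb T (real n) n" "proj_eq (gu *v w) u" using n[OF u] by blast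
    obtain gv where gv: "gv \<in> Gb T (real n) n" "proj_eq (gv *v w) v" using n[OF v] by blast
    obtain a where a: "a \<noteq> 0" "gu *v w = a *\<^sub>R u" using gu(2) unfolding proj_eq_def by blast
    obtain b where b: "b \<noteq> 0" "gv *v w = b *\<^sub>R v" using gv(2) unfolding proj_eq_def by blast
    obtain gu' where gu': "gu' \<in> Gb T (real n) n" "gu' ** gu = mat 1" using Gb_inv[OF T gu(1)] by blast
    define g where "g = gv ** gu'"
    have gG: "g \<in> Gb T (real n) (n + n)" unfolding g_def by (rule Gb_mult[OF gv(1) gu'(1)])
    have "gu' *v u = (1 / a) *\<^sub>R (gu' *v (gu *v w))" using a by (simp add: matrix_vector_mult_scaleR)
    also have "gu' *v (gu *v w) = w" using gu'(2) by (simp add: matrix_vector_mul_assoc)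
    finally have "g *v u = (1 / a) *\<^sub>R (gv *v w)"
      unfolding g_def by (simp add: matrix_vector_mul_assoc[symmetric] matrix_vector_mult_scaleR)
    then have gu_eq: "g *v u = (b / a) *\<^sub>R v" using b by simp
    obtain R \<Phi> where RP: "\<forall>t\<in>{0..1}. R t \<in> T \<and> norm (R t) \<le> real (n + n) * real n + 1"
        "fundamental_solution R \<Phi>" "\<Phi> 1 = g"
      using ode_final[OF T _ gG] by auto
    have "proj_eq (\<Phi> 1 *v u) v"
      unfolding RP(3) by (rule proj_eqI'[OF v _ gu_eq]) (use a b in simp)
    then show ?thesis using RP unfolding K_def by blast
  qed
  ultimately show ?thesis by blast
qed


end
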